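(* Let $G$ be an infinite group. Then: (1) the family of all small subsets of $G$ and the family of all sparse subsets of $G$ are both $\nabla$-complete; (2) if $\mathcal{I}$ is a nonempty family of subsets of $G$ closed under finite unions and under taking subsets which is both $\Delta$-complete and $\nabla$-complete, then $\mathcal{I}=\mathcal{P}_G$ (in particular, no ideal of $\mathcal{P}_G$ is both $\Delta$-complete and $\nabla$-complete); (3) if $\mathcal{I}$ is a group ideal in $\mathcal{P}_G$, then $\mathcal{I}$ is $\Delta$-complete and every member of $\mathcal{I}$ is a small subset of $G$.
   Context: $\Delta(A)=\{g\in G: gA\cap A$ is infinite$\}$ and $\nabla(A)=\{B\subseteq G:\Delta(B)=A\}$. A family $\mathcal{F}$ of subsets of $G$ is $\Delta$-complete if $\Delta(A)\in\mathcal{F}$ for each $A\in\mathcal{F}$, and $\nabla$-complete if $\nabla(A)\subseteq\mathcal{F}$ for each $A\in\mathcal{F}$. An ideal in $\mathcal{P}_G$ is a family $\mathcal{I}$ of subsets with $G\notin\mathcal{I}$, closed under finite unions and subsets; it is a group ideal if it contains all finite subsets and $A,B\in\mathcal{I}$ imply $AB^{-1}\in\mathcal{I}$. $A$ is large if $G=FA$ for some finite $F$; small if $L\setminus A$ is large for every large $L$. $A$ is sparse if for every infinite $X\subseteq G$ there is finite $F\subseteq X$ with $\bigcap_{g\in F}gA$ finite. *)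

theory Defs
  imports Main
begin

text \<open>The group G is the universe of a type of class group_add (written additively:
  gA is (+) g ` A and A B^-1 is the set of all a - b).\<close>

definition Delta :: "'a::group_add set \<Rightarrow> 'a set" where
  "Delta A = {g. infinite (((+) g ` A) \<inter> A)}"

definition Nabla :: "'a::group_add set \<Rightarrow> 'a set set" where
  "Nabla A = {B. Delta B = A}"

definition Delta_complete :: "'a::group_add set set \<Rightarrow> bool" where
  "Delta_complete F \<longleftrightarrow> (\<forall>A\<in>F. Delta A \<in> F)"

definition Nabla_complete :: "'a::group_add set set \<Rightarrow> bool" where
  "Nabla_complete F \<longleftrightarrow> (\<forall>A\<in>F. Nabla A \<subseteq> F)"

definition set_mult :: "'a::group_add set \<Rightarrow> 'a set \<Rightarrow> 'a set" where
  "set_mult F A = {f + a | f a. f \<in> F \<and> a \<in> A}"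

definition set_div :: "'a::group_add set \<Rightarrow> 'a set \<Rightarrow> 'a set" where
  "set_div A B = {a - b | a b. a \<in> A \<and> b \<in> B}"

definition large :: "'a::group_add set \<Rightarrow> bool" where
  "large A \<longleftrightarrow> (\<exists>F. finite F \<and> set_mult F A = UNIV)"

definition small :: "'a::group_add set \<Rightarrow> bool" where
  "small A \<longleftrightarrow> (\<forall>L. large L \<longrightarrow> large (L - A))"

definition sparse :: "'a::group_add set \<Rightarrow> bool" where
  "sparse A \<longleftrightarrow> (\<forall>X. infinite X \<longrightarrow>
      (\<exists>F. F \<subseteq> X \<and> finite F \<and> finite (\<Inter>g\<in>F. (+) g ` A)))"

definition ideal_of :: "'a set set \<Rightarrow> bool" where
  "ideal_of I \<longleftrightarrow> UNIV \<notin> I \<and> {} \<in> I \<and>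
      (\<forall>A\<in>I. \<forall>B\<in>I. A \<union> B \<in> I) \<and> (\<forall>A\<in>I. \<forall>B. B \<subseteq> A \<longrightarrow> B \<in> I)"

definition group_ideal :: "'a::group_add set set \<Rightarrow> bool" where
  "group_ideal I \<longleftrightarrow> ideal_of I \<and> (\<forall>A. finite A \<longrightarrow> A \<in> I) \<and>
      (\<forall>A\<in>I. \<forall>B\<in>I. set_div A B \<in> I)"

end

theory Submission
  imports Defs
begin

unbundle cardinal_syntax


lemma large_rtrans: assumes "large L" shows "large ((\<lambda>x. x + c) ` L)"
proof -
  obtain F where F: "finite F" "set_mult F L = UNIV" using assms unfolding large_def by auto
  have "set_mult F ((\<lambda>x. x + c) ` L) = UNIV"
  proof (intro set_eqI iffI)
    fix z :: 'a
    have "z - c \<in> set_mult F L" using F by auto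
    then obtain f a where "f \<in> F" "a \<in> L" "z - c = f + a" unfolding set_mult_def by auto
    then have "z = f + (a + c)" using diff_add_cancel[of z c] by (simp add: add.assoc)
    then show "z \<in> set_mult F ((\<lambda>x. x + c) ` L)" unfolding set_mult_def using \<open>f\<in>F\<close> \<open>a\<in>L\<close> by blast
  qed auto
  then show ?thesis using F unfolding large_def by blast
qed

lemma large_ltrans: assumes "large L" shows "large ((+) c ` L)"
proof -
  obtain F where F: "finite F" "set_mult F L = UNIV" using assms unfolding large_def by auto
  have "set_mult ((\<lambda>f. f - c) ` F) ((+) c ` L) = UNIV"
  proof (intro set_eqI iffI)
    fix z :: 'a
    have "z \<in> set_mult F L" using F by auto
    then obtain f a where "f \<in> F" "a \<in> L" "z = f + a" unfolding set_mult_def by auto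
    then have "z = (f - c) + (c + a)" by (simp add: add.assoc[symmetric])
    then show "z \<in> set_mult ((\<lambda>f. f - c) ` F) ((+) c ` L)" unfolding set_mult_def using \<open>f\<in>F\<close> \<open>a\<in>L\<close> by blast
  qed auto
  then show ?thesis using F unfolding large_def by blast
qed

lemma small_rtrans: assumes "small A" shows "small ((\<lambda>x. x + c) ` A)"
  unfolding small_def
proof (intro allI impI)
  fix L :: "'a set" assume "large L"
  then have "large ((\<lambda>x. x + (-c)) ` L)" by (rule large_rtrans)
  then have "large ((\<lambda>x. x + (-c)) ` L - A)" using assms unfolding small_def by blast
  then have "large ((\<lambda>x. x + c) ` ((\<lambda>x. x + (-c)) ` L - A))" by (rule large_rtrans)
  moreover have "(\<lambda>x. x + c) ` ((\<lambda>x. x + (-c)) ` L - A) = L - (\<lambda>x. x + c) ` A"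
  proof (intro set_eqI iffI)
    fix y assume "y \<in> (\<lambda>x. x + c) ` ((\<lambda>x. x + (-c)) ` L - A)"
    then obtain l where l: "l \<in> L" "l + - c \<notin> A" "y = l + -c + c" by auto
    then have "y = l" by (simp add: add.assoc)
    moreover have "y \<notin> (\<lambda>x. x + c) ` A"
    proof
      assume "y \<in> (\<lambda>x. x + c) ` A"
      then obtain a where "a \<in> A" "y = a + c" by auto
      then have "l + -c = a" using \<open>y = l\<close> by (simp add: add.assoc)
      then show False using l \<open>a\<in>A\<close> by simp
    qed
    ultimately show "y \<in> L - (\<lambda>x. x + c) ` A" using l by auto
  next
    fix y assume y: "y \<in> L - (\<lambda>x. x + c) ` A"
    have "y + -c \<notin> A"
    proof
      assume "y + -c \<in> A"
      then have "(y + -c) + c \<in> (\<lambda>x. x + c) ` A" by blast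
      then show False using y by (simp add: add.assoc)
    qed
    moreover have "y = y + -c + c" by (simp add: add.assoc)
    ultimately show "y \<in> (\<lambda>x. x + c) ` ((\<lambda>x. x + (-c)) ` L - A)" using y by blast
  qed
  ultimately show "large (L - (\<lambda>x. x + c) ` A)" by simp
qed

lemma small_ltrans: assumes "small A" shows "small ((+) c ` A)"
  unfolding small_def
proof (intro allI impI)
  fix L :: "'a set" assume "large L"
  then have "large ((+) (-c) ` L)" by (rule large_ltrans)
  then have "large ((+) (-c) ` L - A)" using assms unfolding small_def by blast
  then have "large ((+) c ` ((+) (-c) ` L - A))" by (rule large_ltrans)
  moreover have "(+) c ` ((+) (-c) ` L - A) = L - (+) c ` A"
  proof (intro set_eqI iffI)
    fix y assume "y \<in> (+) c ` ((+) (-c) ` L - A)"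
    then obtain l where l: "l \<in> L" "-c + l \<notin> A" "y = c + (-c + l)" by auto
    then have "y = l" by (simp add: add.assoc[symmetric])
    moreover have "y \<notin> (+) c ` A"
    proof
      assume "y \<in> (+) c ` A"
      then obtain a where "a \<in> A" "y = c + a" by auto
      then have "-c + l = a" using \<open>y = l\<close> by (simp add: add.assoc[symmetric])
      then show False using l \<open>a\<in>A\<close> by simp
    qed
    ultimately show "y \<in> L - (+) c ` A" using l by auto
  next
    fix y assume y: "y \<in> L - (+) c ` A"
    have "-c + y \<notin> A"
    proof
      assume "-c + y \<in> A"
      then have "c + (-c + y) \<in> (+) c ` A" by blast
      then show False using y by (simp add: add.assoc[symmetric])
    qed
    moreover have "y = c + (-c + y)" by (simp add: add.assoc[symmetric])
    ultimately show "y \<in> (+) c ` ((+) (-c) ` L - A)" using y by blast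
  qed
  ultimately show "large (L - (+) c ` A)" by simp
qed

lemma small_Un: "small A \<Longrightarrow> small B \<Longrightarrow> small (A \<union> B)"
  unfolding small_def proof (intro allI impI)
  fix L :: "'a set" assume "\<forall>L. large L \<longrightarrow> large (L - A)" "\<forall>L. large L \<longrightarrow> large (L - B)" "large L"
  then have "large ((L - A) - B)" by blast
  moreover have "(L - A) - B = L - (A \<union> B)" by blast
  ultimately show "large (L - (A \<union> B))" by simp
qed

lemma small_empty: "small {}" unfolding small_def by simp

lemma small_UN: "finite X \<Longrightarrow> (\<And>x. x \<in> X \<Longrightarrow> small (h x)) \<Longrightarrow> small (\<Union>x\<in>X. h x)"
  by (induction X rule: finite_induct) (auto intro: small_Un small_empty)

lemma not_small_UNIV: "\<not> small (UNIV :: 'a::group_add set)"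
proof
  assume "small (UNIV :: 'a set)"
  moreover have "large (UNIV :: 'a set)" unfolding large_def set_mult_def
    by (rule exI[of _ "{0}"]) auto
  ultimately have "large ({} :: 'a set)" unfolding small_def by fastforce
  then show False unfolding large_def set_mult_def by auto
qed



lemma thick_pt:
  assumes "\<not> large M" "infinite (UNIV::'a::group_add set)" "finite K" "finite S"
  shows "\<exists>x::'a. x \<notin> S \<and> (\<forall>k\<in>K. -k + x \<notin> M)"
proof (cases "M = {}")
  case True
  then show ?thesis using assms(2,4) by (metis empty_iff ex_new_if_finite)
next
  case False
  then obtain m0 where m0: "m0 \<in> M" by auto
  let ?K = "K \<union> (\<lambda>s. s - m0) ` S"
  have "finite ?K" using assms by auto
  then have "set_mult ?K M \<noteq> UNIV" using assms(1) unfolding large_def by blast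
  then obtain x where x: "x \<notin> set_mult ?K M" by auto
  have "x \<notin> S"
  proof
    assume "x \<in> S"
    then have "x = (x - m0) + m0" "x - m0 \<in> ?K" by auto
    then show False using x m0 unfolding set_mult_def by blast
  qed
  moreover have "\<forall>k\<in>K. -k + x \<notin> M"
  proof (intro ballI notI)
    fix k assume "k \<in> K" "-k + x \<in> M"
    moreover have "x = k + (-k + x)" by (simp add: add.assoc[symmetric])
    ultimately show False using x unfolding set_mult_def by blast
  qed
  ultimately show ?thesis by blast
qed

lemma small_nabla:
  assumes inf: "infinite (UNIV::'a::group_add set)" and nB: "\<not> small (B::'a set)"
  shows "\<not> small (Delta B)"
proof
  assume sD: "small (Delta B)"
  obtain L where L: "large L" "\<not> large (L - B)" using nB unfolding small_def by blast
  obtain F where F: "finite F" "set_mult F L = UNIV" using L(1) unfolding large_def by auto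
  have cover: "\<exists>f1\<in>F. \<exists>f2\<in>F. -f2 + g + f1 \<in> Delta B" for g
  proof (rule ccontr)
    assume "\<not> ?thesis"
    then have fin: "\<forall>f1\<in>F. \<forall>f2\<in>F. finite (((+) (-f2 + g + f1) ` B) \<inter> B)"
      unfolding Delta_def by blast
    define U where "U = (\<Union>f1\<in>F. \<Union>f2\<in>F. ((+) (-f2 + g + f1) ` B) \<inter> B)"
    have fU: "finite U" unfolding U_def
      by (rule finite_UN_I[OF F(1)], rule finite_UN_I[OF F(1)]) (use fin in blast)
    define K where "K = F \<union> (\<lambda>f. -g + f) ` F"
    define S where "S = (\<lambda>(f2,u). -g + f2 + u) ` (F \<times> U)"
    have "finite K" "finite S" unfolding K_def S_def using F(1) fU by auto
    then obtain x where x: "x \<notin> S" "\<forall>k\<in>K. -k + x \<notin> L - B"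
      using thick_pt[OF L(2) inf] by blast
    have "x \<in> set_mult F L" using F by auto
    then obtain f1 l1 where f1: "f1 \<in> F" "l1 \<in> L" "x = f1 + l1" unfolding set_mult_def by auto
    have "l1 = -f1 + x" using f1 by (simp add: add.assoc[symmetric])
    moreover have "f1 \<in> K" using f1 unfolding K_def by auto
    ultimately have l1B: "l1 \<in> B" using x(2) f1 by auto
    have "g + x \<in> set_mult F L" using F by auto
    then obtain f2 l2 where f2: "f2 \<in> F" "l2 \<in> L" "g + x = f2 + l2" unfolding set_mult_def by auto
    have "-f2 + (g + x) = l2" by (simp add: f2(3))
    then have l2eq: "l2 = -f2 + g + x" by (simp add: add.assoc)
    have "-g + f2 \<in> K" using f2 unfolding K_def by auto
    moreover have "-(-g + f2) + x = l2" using l2eq by (simp add: minus_add add.assoc)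
    ultimately have l2B: "l2 \<in> B" using x(2) f2 by auto
    have "l2 = (-f2 + g + f1) + l1" using l2eq f1 by (simp add: add.assoc)
    then have "l2 \<in> ((+) (-f2 + g + f1) ` B) \<inter> B" using l1B l2B by blast
    then have "l2 \<in> U" unfolding U_def using f1 f2 by blast
    moreover have "x = -g + f2 + l2"
    proof -
      have "-g + (g + x) = -g + (f2 + l2)" by (simp add: f2(3))
      then show ?thesis by (simp add: add.assoc)
    qed
    ultimately have "x \<in> S" unfolding S_def using f2 by force
    then show False using x by blast
  qed
  have "UNIV = (\<Union>f1\<in>F. \<Union>f2\<in>F. (\<lambda>x. x + -f1) ` ((+) f2 ` Delta B))"
  proof (intro set_eqI iffI)
    fix g :: 'a
    obtain f1 f2 where ff: "f1 \<in> F" "f2 \<in> F" "-f2 + g + f1 \<in> Delta B" using cover by blast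
    have "g = (f2 + (-f2 + g + f1)) + -f1" by (simp add: add.assoc[symmetric])
    then show "g \<in> (\<Union>f1\<in>F. \<Union>f2\<in>F. (\<lambda>x. x + -f1) ` ((+) f2 ` Delta B))" using ff by blast
  qed auto
  moreover have "small (\<Union>f1\<in>F. \<Union>f2\<in>F. (\<lambda>x. x + -f1) ` ((+) f2 ` Delta B))"
    using F(1) by (intro small_UN small_rtrans small_ltrans sD) auto
  ultimately show False using not_small_UNIV by metis
qed

lemma sparse_nabla:
  assumes nB: "\<not> sparse (B::'a::group_add set)"
  shows "\<not> sparse (Delta B)"
proof -
  obtain X where X: "infinite X" "\<forall>F. F \<subseteq> X \<and> finite F \<longrightarrow> infinite (\<Inter>g\<in>F. (+) g ` B)"
    using nB unfolding sparse_def by blast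
  have "infinite (\<Inter>g\<in>F. (+) g ` Delta B)" if "F \<subseteq> X" "finite F" for F
  proof -
    have "X \<subseteq> (\<Inter>g\<in>F. (+) g ` Delta B)"
    proof
      fix z assume z: "z \<in> X"
      show "z \<in> (\<Inter>g\<in>F. (+) g ` Delta B)"
      proof
        fix y assume y: "y \<in> F"
        have "{z,y} \<subseteq> X" using z y that by auto
        then have "infinite (\<Inter>g\<in>{z,y}. (+) g ` B)" using X(2) by blast
        then have inf1: "infinite (((+) z ` B) \<inter> ((+) y ` B))" by simp
        have "(+) (-y) ` (((+) z ` B) \<inter> ((+) y ` B)) \<subseteq> ((+) (-y + z) ` B) \<inter> B"
        proof
          fix w assume "w \<in> (+) (-y) ` (((+) z ` B) \<inter> ((+) y ` B))"
          then obtain b b' where bb: "b \<in> B" "b' \<in> B" "z + b = y + b'" "w = -y + (z + b)" by blast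
          then have "w = b'" by (simp add: add.assoc[symmetric])
          moreover have "w = (-y + z) + b" using bb by (simp add: add.assoc)
          ultimately show "w \<in> ((+) (-y + z) ` B) \<inter> B" using bb by blast
        qed
        moreover have "infinite ((+) (-y) ` (((+) z ` B) \<inter> ((+) y ` B)))"
          using inf1 finite_imageD inj_on_def by (metis add_left_cancel)
        ultimately have "infinite (((+) (-y + z) ` B) \<inter> B)" using finite_subset by blast
        then have "-y + z \<in> Delta B" unfolding Delta_def by simp
        moreover have "z = y + (-y + z)" by (simp add: add.assoc[symmetric])
        ultimately show "z \<in> (+) y ` Delta B" by blast
      qed
    qed
    then show ?thesis using X(1) finite_subset by blast
  qed
  then show ?thesis using X(1) unfolding sparse_def by blast
qed



lemma gi_sub: "group_ideal I \<Longrightarrow> A \<in> I \<Longrightarrow> B \<subseteq> A \<Longrightarrow> B \<in> I"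
  unfolding group_ideal_def ideal_of_def by blast

lemma gi_div: "group_ideal I \<Longrightarrow> A \<in> I \<Longrightarrow> B \<in> I \<Longrightarrow> set_div A B \<in> I"
  unfolding group_ideal_def by blast

lemma gi_UNIV: "group_ideal I \<Longrightarrow> UNIV \<notin> I"
  unfolding group_ideal_def ideal_of_def by blast

lemma gi_fin: "group_ideal I \<Longrightarrow> finite A \<Longrightarrow> A \<in> I"
  unfolding group_ideal_def by blast

lemma gi_delta: assumes "group_ideal I" "A \<in> I" shows "Delta A \<in> I"
proof -
  have "Delta A \<subseteq> set_div A A"
  proof
    fix g assume "g \<in> Delta A"
    then have "((+) g ` A) \<inter> A \<noteq> {}" unfolding Delta_def by auto
    then obtain a where "a \<in> A" "g + a \<in> A" by auto
    moreover have "g = (g + a) - a" by simp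
    ultimately show "g \<in> set_div A A" unfolding set_div_def by blast
  qed
  moreover have "set_div A A \<in> I" using assms gi_div by blast
  ultimately show ?thesis using assms gi_sub by blast
qed

lemma gi_compl_large: assumes "group_ideal I" "B \<in> I" shows "large (UNIV - B)"
proof -
  have "set_div B B \<in> I" using assms gi_div by blast
  then have "set_div B B \<noteq> UNIV" using assms gi_UNIV by metis
  then obtain g where g: "g \<notin> set_div B B" by auto
  have "y \<in> set_mult {0, -g} (UNIV - B)" for y
  proof -
    show "y \<in> set_mult {0, -g} (UNIV - B)"
    proof (cases "y \<in> B")
      case True
      have "g + y \<notin> B"
      proof
        assume "g + y \<in> B"
        moreover have "g = (g + y) - y" by simp
        ultimately show False using g True unfolding set_div_def by blast
      qed
      moreover have "y = -g + (g + y)" by (simp add: add.assoc[symmetric])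
      ultimately show ?thesis unfolding set_mult_def by blast
    next
      case False
      moreover have "y = 0 + y" by simp
      ultimately show ?thesis unfolding set_mult_def by blast
    qed
  qed
  then have "set_mult {0, -g} (UNIV - B) = UNIV" by blast
  moreover have "finite {0, -g}" by simp
  ultimately show ?thesis unfolding large_def by blast
qed


lemma set_mult_assoc_sub: "set_mult K (set_mult F A) \<subseteq> set_mult (set_mult K F) A"
proof
  fix y assume "y \<in> set_mult K (set_mult F A)"
  then obtain k f a where kfa: "k \<in> K" "f \<in> F" "a \<in> A" "y = k + (f + a)" unfolding set_mult_def by blast
  then have "k + f \<in> set_mult K F" unfolding set_mult_def by blast
  moreover have "y = (k + f) + a" using kfa by (simp add: add.assoc)
  ultimately show "y \<in> set_mult (set_mult K F) A" using kfa(3) unfolding set_mult_def by blast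
qed

lemma set_mult_mono: "B \<subseteq> C \<Longrightarrow> set_mult K B \<subseteq> set_mult K C"
  unfolding set_mult_def by auto

lemma finite_set_mult: "finite K \<Longrightarrow> finite F \<Longrightarrow> finite (set_mult K F)"
proof -
  assume "finite K" "finite F"
  moreover have "set_mult K F = (\<lambda>p. fst p + snd p) ` (K \<times> F)"
  proof (intro set_eqI iffI)
    fix y assume "y \<in> set_mult K F"
    then obtain k f where "k \<in> K" "f \<in> F" "y = k + f" unfolding set_mult_def by blast
    then show "y \<in> (\<lambda>p. fst p + snd p) ` (K \<times> F)" by (intro image_eqI[of _ _ "(k,f)"]) auto
  next
    fix y assume "y \<in> (\<lambda>p. fst p + snd p) ` (K \<times> F)"
    then obtain k f where "k \<in> K" "f \<in> F" "y = k + f" by auto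
    then show "y \<in> set_mult K F" unfolding set_mult_def by blast
  qed
  ultimately show ?thesis by simp
qed

lemma gi_small: assumes gi: "group_ideal I" and A: "A \<in> I" shows "small A"
  unfolding small_def
proof (intro allI impI)
  fix L :: "'a set" assume "large L"
  then obtain F where F: "finite F" "set_mult F L = UNIV" unfolding large_def by auto
  have "set_mult F A = set_div F (set_div {0} A)"
  proof (intro set_eqI iffI)
    fix y assume "y \<in> set_mult F A"
    then obtain f a where fa: "f \<in> F" "a \<in> A" "y = f + a" unfolding set_mult_def by blast
    then have "0 - a \<in> set_div {0} A" unfolding set_div_def by blast
    moreover have "y = f - (0 - a)" using fa by simp
    ultimately show "y \<in> set_div F (set_div {0} A)" using fa(1) unfolding set_div_def by blast
  next
    fix y assume "y \<in> set_div F (set_div {0} A)"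
    then obtain f a where fa: "f \<in> F" "a \<in> A" "y = f - (0 - a)" unfolding set_div_def by blast
    then have "y = f + a" by simp
    then show "y \<in> set_mult F A" using fa unfolding set_mult_def by blast
  qed
  moreover have "{0} \<in> I" "F \<in> I" using gi F(1) gi_fin[of I] by auto
  ultimately have "set_mult F A \<in> I" using A gi gi_div by metis
  then have "large (UNIV - set_mult F A)" using gi_compl_large gi by blast
  then obtain K where K: "finite K" "set_mult K (UNIV - set_mult F A) = UNIV" unfolding large_def by auto
  have "UNIV - set_mult F A \<subseteq> set_mult F (L - A)"
  proof
    fix y assume y: "y \<in> UNIV - set_mult F A"
    have "y \<in> set_mult F L" using F by auto
    then obtain f l where "f \<in> F" "l \<in> L" "y = f + l" unfolding set_mult_def by auto
    moreover then have "l \<notin> A" using y unfolding set_mult_def by blast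
    ultimately show "y \<in> set_mult F (L - A)" unfolding set_mult_def by blast
  qed
  then have "set_mult K (UNIV - set_mult F A) \<subseteq> set_mult K (set_mult F (L - A))"
    by (rule set_mult_mono)
  also have "\<dots> \<subseteq> set_mult (set_mult K F) (L - A)" by (rule set_mult_assoc_sub)
  finally have "set_mult (set_mult K F) (L - A) = UNIV" using K(2) by auto
  moreover have "finite (set_mult K F)" using finite_set_mult K(1) F(1) by blast
  ultimately show "large (L - A)" unfolding large_def by blast
qed



definition E3 :: "'a::group_add set \<Rightarrow> 'a set" where
  "E3 P = {p - q + s | p q s. p \<in> P \<and> q \<in> P \<and> s \<in> P}"

lemma E3_card:
  assumes inf: "infinite (UNIV::'a::group_add set)" and P: "|P::'a set| <o |UNIV::'a set|"
  shows "|E3 P| <o |UNIV::'a set|"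
proof -
  have "E3 P = (\<lambda>x. fst x - fst (snd x) + snd (snd x)) ` (P \<times> (P \<times> P))"
  proof (intro set_eqI iffI)
    fix y assume "y \<in> E3 P"
    then obtain p q s where "p \<in> P" "q \<in> P" "s \<in> P" "y = p - q + s" unfolding E3_def by blast
    then show "y \<in> (\<lambda>x. fst x - fst (snd x) + snd (snd x)) ` (P \<times> (P \<times> P))"
      by (intro image_eqI[of _ _ "(p,q,s)"]) auto
  next
    fix y assume "y \<in> (\<lambda>x. fst x - fst (snd x) + snd (snd x)) ` (P \<times> (P \<times> P))"
    then obtain p q s where "p \<in> P" "q \<in> P" "s \<in> P" "y = p - q + s" by auto
    then show "y \<in> E3 P" unfolding E3_def by blast
  qed
  moreover have "|P \<times> (P \<times> P)| <o |UNIV::'a set|"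
  proof (cases "finite P")
    case True
    then have "finite (Field ( |P \<times> (P \<times> P)| ))" "\<not> finite (Field ( |UNIV::'a set| ))"
      using inf unfolding Field_card_of by auto
    then show ?thesis using finite_ordLess_infinite[OF card_of_Well_order card_of_Well_order] by blast
  next
    case False
    have "|P \<times> P| \<le>o |P|" using card_of_Times_same_infinite[OF False] ordIso_iff_ordLeq by blast
    then have "|P \<times> (P \<times> P)| \<le>o |P \<times> P|" by (rule card_of_Times_mono2)
    also have "|P \<times> P| \<le>o |P|" by fact
    finally show ?thesis using P ordLeq_ordLess_trans by blast
  qed
  ultimately show ?thesis using card_of_image[of "\<lambda>x. fst x - fst (snd x) + snd (snd x)" "P \<times> (P \<times> P)"]
    ordLeq_ordLess_trans by auto
qed

lemma lin_max:
  fixes lt :: "'i \<Rightarrow> 'i \<Rightarrow> bool"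
  assumes tot: "\<And>x y. x \<noteq> y \<Longrightarrow> lt x y \<or> lt y x"
    and tr: "\<And>x y z. lt x y \<Longrightarrow> lt y z \<Longrightarrow> lt x z"
  shows "finite X \<Longrightarrow> X \<noteq> {} \<Longrightarrow> \<exists>t\<in>X. \<forall>x\<in>X. x = t \<or> lt x t"
proof (induction X rule: finite_ne_induct)
  case (singleton x)
  then show ?case by auto
next
  case (insert x F)
  then obtain t where t: "t \<in> F" "\<forall>y\<in>F. y = t \<or> lt y t" by auto
  show ?case
  proof (cases "lt x t")
    case True
    then show ?thesis using t by auto
  next
    case False
    then have "x = t \<or> lt t x" using tot by blast
    then show ?thesis
    proof
      assume "x = t"
      then show ?thesis using t by auto
    next
      assume xt: "lt t x"
      have "\<forall>y\<in>insert x F. y = x \<or> lt y x"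
      proof
        fix y assume "y \<in> insert x F"
        then have "y = x \<or> y = t \<or> lt y t" using t by auto
        then show "y = x \<or> lt y x" using xt tr by blast
      qed
      then show ?thesis by blast
    qed
  qed
qed

lemma thin_gen:
  fixes v :: "'i \<Rightarrow> 'a::group_add" and lt :: "'i \<Rightarrow> 'i \<Rightarrow> bool"
  assumes tot: "\<And>x y. x \<noteq> y \<Longrightarrow> lt x y \<or> lt y x"
    and irr: "\<And>x. \<not> lt x x"
    and tr: "\<And>x y z. lt x y \<Longrightarrow> lt y z \<Longrightarrow> lt x z"
    and avoid: "\<And>g. v g \<notin> E3 (v ` {b. lt b g})"
  shows "inj v" and "h \<noteq> 0 \<Longrightarrow> finite (((+) h ` range v) \<inter> range v)"
proof -
  show "inj v"
  proof (rule injI, rule ccontr)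
    fix x y assume eq: "v x = v y" and ne: "x \<noteq> y"
    show False
    proof (cases "lt x y")
      case True
      then have "v x \<in> v ` {b. lt b y}" by blast
      then have "v x - v x + v x \<in> E3 (v ` {b. lt b y})" unfolding E3_def by blast
      then have "v y \<in> E3 (v ` {b. lt b y})" using eq by simp
      then show False using avoid by blast
    next
      case False
      then have "lt y x" using tot ne by blast
      then have "v y \<in> v ` {b. lt b x}" by blast
      then have "v y - v y + v y \<in> E3 (v ` {b. lt b x})" unfolding E3_def by blast
      then have "v x \<in> E3 (v ` {b. lt b x})" using eq by simp
      then show False using avoid by blast
    qed
  qed
  assume h: "h \<noteq> 0"
  show "finite (((+) h ` range v) \<inter> range v)"
  proof (rule ccontr)
    let ?S = "((+) h ` range v) \<inter> range v"
    assume "\<not> finite ?S"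
    then obtain w1 where w1: "w1 \<in> ?S" by (metis finite.emptyI ex_in_conv)
    have "\<not> finite (?S - {w1})" using \<open>\<not> finite ?S\<close> by simp
    then obtain w2' where "w2' \<in> ?S - {w1}" by (metis ex_in_conv finite.emptyI)
    then obtain w2 where w2: "w2 \<in> ?S" "w2 \<noteq> w1" by blast
    have "\<not> finite (?S - {w1, w2})" using \<open>\<not> finite ?S\<close> by simp
    then obtain w3' where "w3' \<in> ?S - {w1, w2}" by (metis ex_in_conv finite.emptyI)
    then obtain w3 where w3: "w3 \<in> ?S" "w3 \<noteq> w1" "w3 \<noteq> w2" by blast
    have pair: "\<exists>a c. v c = w \<and> w = h + v a" if "w \<in> ?S" for w
    proof -
      from that obtain a where "w = h + v a" by auto
      moreover from that obtain c where "w = v c" by auto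
      ultimately show ?thesis by metis
    qed
    obtain a1 c1 where p1: "v c1 = w1" "w1 = h + v a1" using pair w1 by blast
    obtain a2 c2 where p2: "v c2 = w2" "w2 = h + v a2" using pair w2(1) by blast
    obtain a3 c3 where p3: "v c3 = w3" "w3 = h + v a3" using pair w3(1) by blast
    have ne: "c1 \<noteq> c2" "c1 \<noteq> c3" "c2 \<noteq> c3" "a1 \<noteq> a2" "a1 \<noteq> a3" "a2 \<noteq> a3"
      using p1(1) p2(1) p3(1) w2(2) w3(2,3) apply (blast, blast, blast)
      using p1(2) p2(2) p3(2) w2(2) w3(2,3) by blast+
    have hac: "a \<noteq> c" if "v c = h + v a" for a c
    proof
      assume "a = c"
      then have "v a = h + v a" using that by simp
      then have "h + v a = 0 + v a" by simp
      then show False using h by (simp only: add_right_cancel)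
    qed
    have ac: "a1 \<noteq> c1" "a2 \<noteq> c2" "a3 \<noteq> c3" using hac p1 p2 p3 by auto
    have key: False if "lt ak t" "lt ck t" "v ck = h + v ak" "t = ai \<and> lt ci t \<or> t = ci \<and> lt ai t"
        "v ci = h + v ai" for ak ck ai ci t
    proof -
      have "h = v ck - v ak" using that(3) by (simp add: add.assoc)
      from that(4) show False
      proof
        assume A: "t = ai \<and> lt ci t"
        have "v t = -h + v ci" using that(5) A by (simp add: add.assoc[symmetric])
        also have "\<dots> = v ak - v ck + v ci" using \<open>h = v ck - v ak\<close> by (simp add: minus_diff_eq)
        finally have "v t \<in> E3 (v ` {b. lt b t})" unfolding E3_def using that(1,2) A by blast
        then show False using avoid by blast
      next
        assume A: "t = ci \<and> lt ai t"
        have "v t = h + v ai" using that(5) A by simp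
        also have "\<dots> = v ck - v ak + v ai" using \<open>h = v ck - v ak\<close> by simp
        finally have "v t \<in> E3 (v ` {b. lt b t})" unfolding E3_def using that(1,2) A by blast
        then show False using avoid by blast
      qed
    qed
    define X where "X = {a1,c1,a2,c2,a3,c3}"
    have "finite X" "X \<noteq> {}" unfolding X_def by auto
    have ex: "\<exists>t\<in>X. \<forall>x\<in>X. x = t \<or> lt x t"
    proof (rule lin_max[where lt=lt])
      show "\<And>x y. x \<noteq> y \<Longrightarrow> lt x y \<or> lt y x" by (rule tot)
      show "\<And>x y z. lt x y \<Longrightarrow> lt y z \<Longrightarrow> lt x z" by (rule tr)
      show "finite X" by fact
      show "X \<noteq> {}" by fact
    qed
    then obtain t where t: "t \<in> X" "\<forall>x\<in>X. x = t \<or> lt x t" by blast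
    have mem: "a1 \<in> X" "c1 \<in> X" "a2 \<in> X" "c2 \<in> X" "a3 \<in> X" "c3 \<in> X" unfolding X_def by auto
    have below: "lt x t" if "x \<in> X" "x \<noteq> t" for x
      using t that by blast
    have tX: "t = a1 \<or> t = c1 \<or> t = a2 \<or> t = c2 \<or> t = a3 \<or> t = c3" using t(1) unfolding X_def by simp
    have gen: False if "t \<noteq> ak" "t \<noteq> ck" "v ck = h + v ak" "ak \<in> X" "ck \<in> X"
       "t = ai \<or> t = ci" "v ci = h + v ai" "ai \<in> X" "ci \<in> X" "ai \<noteq> ci" for ak ck ai ci
    proof -
      have 1: "lt ak t" using below[of ak] that(1,4) by blast
      have 2: "lt ck t" using below[of ck] that(2,5) by blast
      have 3: "t = ai \<and> lt ci t \<or> t = ci \<and> lt ai t"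
      proof (cases "t = ai")
        case True
        then have "ci \<noteq> t" using that(10) by simp
        then show ?thesis using below[of ci] that(9) True by blast
      next
        case False
        then have "t = ci" using that(6) by simp
        moreover have "ai \<noteq> t" using False by simp
        ultimately show ?thesis using below[of ai] that(8) by blast
      qed
      show False using key[where ak=ak and ck=ck and ai=ai and ci=ci and t=t] 1 2 3 that(3,7) by blast
    qed
    have pp: "v c1 = h + v a1" "v c2 = h + v a2" "v c3 = h + v a3" using p1 p2 p3 by auto
    show False
    proof -
      have "(t \<noteq> a1 \<and> t \<noteq> c1) \<or> (t \<noteq> a2 \<and> t \<noteq> c2) \<or> (t \<noteq> a3 \<and> t \<noteq> c3)"
      proof (cases "t = a1 \<or> t = c1")
        case True
        then show ?thesis
        proof
          assume "t = a1"
          then have x1: "t \<noteq> a2" "t \<noteq> a3" using ne by auto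
          show ?thesis
          proof (cases "t = c2")
            case True
            then have "t \<noteq> c3" using ne(3) by simp
            then show ?thesis using x1 by simp
          next
            case False
            then show ?thesis using x1 by simp
          qed
        next
          assume "t = c1"
          then have x1: "t \<noteq> c2" "t \<noteq> c3" using ne by auto
          show ?thesis
          proof (cases "t = a2")
            case True
            then have "t \<noteq> a3" using ne(6) by simp
            then show ?thesis using x1 by simp
          next
            case False
            then show ?thesis using x1 by simp
          qed
        qed
      next
        case False
        then show ?thesis by simp
      qed
      then show False
      proof (elim disjE conjE)
        assume n1: "t \<noteq> a1" and n2: "t \<noteq> c1"
        have "(t = a2 \<or> t = c2) \<or> (t = a3 \<or> t = c3)" using tX n1 n2 by blast
        then show False
          using gen[OF n1 n2 pp(1) mem(1) mem(2) _ pp(2) mem(3) mem(4) ac(2)]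
            gen[OF n1 n2 pp(1) mem(1) mem(2) _ pp(3) mem(5) mem(6) ac(3)]
          by blast
      next
        assume n1: "t \<noteq> a2" and n2: "t \<noteq> c2"
        have "(t = a1 \<or> t = c1) \<or> (t = a3 \<or> t = c3)" using tX n1 n2 by blast
        then show False
          using gen[OF n1 n2 pp(2) mem(3) mem(4) _ pp(1) mem(1) mem(2) ac(1)]
            gen[OF n1 n2 pp(2) mem(3) mem(4) _ pp(3) mem(5) mem(6) ac(3)]
          by blast
      next
        assume n1: "t \<noteq> a3" and n2: "t \<noteq> c3"
        have "(t = a1 \<or> t = c1) \<or> (t = a2 \<or> t = c2)" using tX n1 n2 by blast
        then show False
          using gen[OF n1 n2 pp(3) mem(5) mem(6) _ pp(1) mem(1) mem(2) ac(1)]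
            gen[OF n1 n2 pp(3) mem(5) mem(6) _ pp(2) mem(3) mem(4) ac(2)]
          by blast
      qed
    qed
  qed
qed


lemma exists_thin_pair:
  assumes inf: "infinite (UNIV::'a::group_add set)"
  shows "\<exists>\<phi> :: 'a \<times> nat \<Rightarrow> 'a. inj \<phi> \<and> inj (\<lambda>g. fst g + \<phi> g) \<and>
    (\<forall>h. h \<noteq> 0 \<longrightarrow> finite (((+) h ` range \<phi>) \<inter> range \<phi>)) \<and>
    (\<forall>h. h \<noteq> 0 \<longrightarrow> finite (((+) h ` range (\<lambda>g. fst g + \<phi> g)) \<inter> range (\<lambda>g. fst g + \<phi> g)))"
proof -
  define r where "r = |UNIV :: ('a \<times> nat) set|"
  have WO: "Well_order r" unfolding r_def by (rule card_of_Well_order)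
  have FLD: "Field r = UNIV" unfolding r_def by (rule Field_card_of)
  have CO: "Card_order r" unfolding r_def by (rule card_of_Card_order)
  interpret W: wo_rel r by unfold_locales (rule WO)
  have "|UNIV::nat set| \<le>o |UNIV::'a set|" using inf infinite_iff_card_of_nat by blast
  then have "|(UNIV::'a set) \<times> (UNIV::nat set)| =o |UNIV::'a set|"
    using card_of_Times_infinite[OF inf, of "UNIV::nat set"] by simp
  then have kappa: "r =o |UNIV::'a set|" unfolding r_def by simp
  have small_under: "|underS r g| <o |UNIV::'a set|" for g
  proof -
    have "|underS r g| <o r" using card_of_underS[OF CO] FLD by simp
    then show ?thesis using kappa ordLess_ordIso_trans by blast
  qed
  define Eb where "Eb f g = E3 (f ` underS r g) \<union> (+) (-fst g) ` E3 ((\<lambda>b. fst b + f b) ` underS r g)"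
    for f :: "'a \<times> nat \<Rightarrow> 'a" and g
  define H where "H f g = (SOME y. y \<notin> Eb f g)" for f g
  have adm: "W.adm_wo H"
    unfolding W.adm_wo_def
  proof (intro allI impI)
    fix f g :: "'a \<times> nat \<Rightarrow> 'a" and x
    assume eq: "\<forall>y\<in>underS r x. f y = g y"
    then have "f ` underS r x = g ` underS r x" by (intro image_cong) auto
    moreover have "(\<lambda>b. fst b + f b) ` underS r x = (\<lambda>b. fst b + g b) ` underS r x"
      using eq by (intro image_cong) auto
    ultimately show "H f x = H g x" unfolding H_def Eb_def by simp
  qed
  define \<phi> where "\<phi> = W.worec H"
  have fixp: "\<phi> g = H \<phi> g" for g
    unfolding \<phi>_def using W.worec_fixpoint[OF adm] by metis
  have notU: "Eb f g \<noteq> UNIV" for f g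
  proof
    assume U: "Eb f g = UNIV"
    have c1: "|f ` underS r g| <o |UNIV::'a set|"
      using card_of_image small_under ordLeq_ordLess_trans by blast
    have c2: "|(\<lambda>b. fst b + f b) ` underS r g| <o |UNIV::'a set|"
      using card_of_image small_under ordLeq_ordLess_trans by blast
    have d1: "|E3 (f ` underS r g)| <o |UNIV::'a set|" by (rule E3_card[OF inf c1])
    have d2: "|E3 ((\<lambda>b. fst b + f b) ` underS r g)| <o |UNIV::'a set|" by (rule E3_card[OF inf c2])
    have d3: "|(+) (-fst g) ` E3 ((\<lambda>b. fst b + f b) ` underS r g)| <o |UNIV::'a set|"
      using card_of_image d2 ordLeq_ordLess_trans by blast
    have "|Eb f g| <o |UNIV::'a set|" unfolding Eb_def
      by (rule card_of_Un_ordLess_infinite[OF inf d1 d3])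
    then show False using U ordLess_irreflexive by metis
  qed
  have avoid: "\<phi> g \<notin> Eb \<phi> g" for g
  proof -
    have "\<exists>y. y \<notin> Eb \<phi> g" using notU by blast
    then have "H \<phi> g \<notin> Eb \<phi> g" unfolding H_def by (rule someI_ex)
    then show ?thesis using fixp by simp
  qed
  define lt where "lt b g \<longleftrightarrow> b \<in> underS r g" for b g
  have lt_eq: "{b. lt b g} = underS r g" for g unfolding lt_def by simp
  have tot: "lt x y \<or> lt y x" if "x \<noteq> y" for x y
    using W.TOTALS FLD that unfolding lt_def underS_def by blast
  have irr: "\<not> lt x x" for x unfolding lt_def underS_def by simp
  have tr: "lt x z" if "lt x y" "lt y z" for x y z
  proof -
    have xy: "(x,y) \<in> r" "x \<noteq> y" and yz: "(y,z) \<in> r" "y \<noteq> z" using that unfolding lt_def underS_def by auto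
    have "(x,z) \<in> r" using W.TRANS xy yz unfolding trans_def by blast
    moreover have "x \<noteq> z"
    proof
      assume "x = z"
      then have "(y,x) \<in> r" using yz by simp
      then show False using W.ANTISYM xy unfolding antisym_def by blast
    qed
    ultimately show ?thesis unfolding lt_def underS_def by simp
  qed
  have av1: "\<phi> g \<notin> E3 (\<phi> ` {b. lt b g})" for g
    using avoid[of g] unfolding Eb_def lt_eq by blast
  have av2: "(\<lambda>g. fst g + \<phi> g) g \<notin> E3 ((\<lambda>g. fst g + \<phi> g) ` {b. lt b g})" for g
  proof
    assume "(\<lambda>g. fst g + \<phi> g) g \<in> E3 ((\<lambda>g. fst g + \<phi> g) ` {b. lt b g})"
    then have "-fst g + (fst g + \<phi> g) \<in> (+) (-fst g) ` E3 ((\<lambda>b. fst b + \<phi> b) ` underS r g)"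
      unfolding lt_eq by blast
    then have "\<phi> g \<in> Eb \<phi> g" unfolding Eb_def by (simp add: add.assoc[symmetric])
    then show False using avoid by blast
  qed
  have "inj \<phi>" "\<And>h. h \<noteq> 0 \<Longrightarrow> finite (((+) h ` range \<phi>) \<inter> range \<phi>)"
    subgoal by (rule thin_gen(1)[where lt=lt]) (use tot irr tr av1 in blast)+
    subgoal for h by (rule thin_gen(2)[where lt=lt]) (use tot irr tr av1 in blast)+
    done
  moreover have "inj (\<lambda>g. fst g + \<phi> g)"
    "\<And>h. h \<noteq> 0 \<Longrightarrow> finite (((+) h ` range (\<lambda>g. fst g + \<phi> g)) \<inter> range (\<lambda>g. fst g + \<phi> g))"
    subgoal by (rule thin_gen(1)[where lt=lt]) (use tot irr tr av2 in blast)+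
    subgoal for h by (rule thin_gen(2)[where lt=lt]) (use tot irr tr av2 in blast)+
    done
  ultimately show ?thesis by blast
qed


lemma part2:
  assumes inf: "infinite (UNIV::'a::group_add set)"
    and ne: "(I :: 'a set set) \<noteq> {}" and un: "\<forall>A\<in>I. \<forall>B\<in>I. A \<union> B \<in> I"
    and sub: "\<forall>A\<in>I. \<forall>B. B \<subseteq> A \<longrightarrow> B \<in> I"
    and dc: "Delta_complete I" and nc: "Nabla_complete I"
  shows "I = Pow UNIV"
proof -
  obtain A0 where "A0 \<in> I" using ne by blast
  then have e: "{} \<in> I" using sub by blast
  have via: "B \<in> I" if "Delta B \<in> I" for B
  proof -
    have "B \<in> Nabla (Delta B)" unfolding Nabla_def by simp
    then show ?thesis using nc that unfolding Nabla_complete_def by blast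
  qed
  have fin: "A \<in> I" if "finite A" for A :: "'a set"
  proof -
    have "Delta A = {}" unfolding Delta_def using that by auto
    then show ?thesis using via e by simp
  qed
  have thinI: "B \<in> I" if "\<forall>h. h \<noteq> 0 \<longrightarrow> finite (((+) h ` B) \<inter> B)" for B :: "'a set"
  proof -
    have "Delta B \<subseteq> {0}" unfolding Delta_def using that by auto
    then have "finite (Delta B)" using finite_subset by blast
    then show ?thesis using fin via by blast
  qed
  obtain \<phi> :: "'a \<times> nat \<Rightarrow> 'a" where phi: "inj \<phi>" "inj (\<lambda>g. fst g + \<phi> g)"
    "\<forall>h. h \<noteq> 0 \<longrightarrow> finite (((+) h ` range \<phi>) \<inter> range \<phi>)"
    "\<forall>h. h \<noteq> 0 \<longrightarrow> finite (((+) h ` range (\<lambda>g. fst g + \<phi> g)) \<inter> range (\<lambda>g. fst g + \<phi> g))"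
    using exists_thin_pair[OF inf] by blast
  define B1 where "B1 = range \<phi>"
  define B2 where "B2 = range (\<lambda>g. fst g + \<phi> g)"
  have "B1 \<in> I" unfolding B1_def using thinI phi(3) by blast
  moreover have "B2 \<in> I" unfolding B2_def using thinI phi(4) by blast
  ultimately have U: "B1 \<union> B2 \<in> I" using un by blast
  have "Delta (B1 \<union> B2) = UNIV"
  proof (intro set_eqI iffI)
    fix g :: 'a
    let ?f = "\<lambda>n. fst (g,n) + \<phi> (g,n)"
    have injf: "inj ?f"
    proof (rule injI)
      fix m n assume "?f m = ?f n"
      then have "(g,m) = (g,n)" using phi(2) unfolding inj_def by blast
      then show "m = n" by simp
    qed
    have "infinite (range ?f)"
    proof
      assume "finite (range ?f)"
      then have "finite (UNIV::nat set)" using finite_imageD injf by blast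
      then show False by simp
    qed
    moreover have "range ?f \<subseteq> ((+) g ` (B1 \<union> B2)) \<inter> (B1 \<union> B2)"
    proof
      fix y assume "y \<in> range ?f"
      then obtain n where n: "y = g + \<phi> (g,n)" by auto
      have "\<phi> (g,n) \<in> B1" unfolding B1_def by blast
      then have "y \<in> (+) g ` (B1 \<union> B2)" using n by blast
      moreover have "y \<in> B2" unfolding B2_def by (rule image_eqI[of _ _ "(g,n)"]) (simp_all add: n)
      ultimately show "y \<in> ((+) g ` (B1 \<union> B2)) \<inter> (B1 \<union> B2)" by blast
    qed
    ultimately have "infinite (((+) g ` (B1 \<union> B2)) \<inter> (B1 \<union> B2))" using finite_subset by blast
    then show "g \<in> Delta (B1 \<union> B2)" unfolding Delta_def by simp
  qed simp
  then have "UNIV \<in> I" using dc U unfolding Delta_complete_def by metis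
  then have "X \<in> I" for X using sub by blast
  then show ?thesis by blast
qed

theorem theorem7p4:
  assumes "infinite (UNIV :: 'a::group_add set)"
  shows "(Nabla_complete {A :: 'a set. small A} \<and> Nabla_complete {A :: 'a set. sparse A})
    \<and> (\<forall>I :: 'a set set. I \<noteq> {} \<longrightarrow> (\<forall>A\<in>I. \<forall>B\<in>I. A \<union> B \<in> I) \<longrightarrow>
            (\<forall>A\<in>I. \<forall>B. B \<subseteq> A \<longrightarrow> B \<in> I) \<longrightarrow>
            Delta_complete I \<longrightarrow> Nabla_complete I \<longrightarrow> I = Pow UNIV)
    \<and> \<not> (\<exists>I :: 'a set set. ideal_of I \<and> Delta_complete I \<and> Nabla_complete I)
    \<and> (\<forall>I :: 'a set set. group_ideal I \<longrightarrow> Delta_complete I \<and> (\<forall>A\<in>I. small A))"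
proof (intro conjI allI impI)
  show "Nabla_complete {A :: 'a set. small A}"
    unfolding Nabla_complete_def Nabla_def using small_nabla[OF assms] by blast
  show "Nabla_complete {A :: 'a set. sparse A}"
    unfolding Nabla_complete_def Nabla_def using sparse_nabla by blast
  show "I = Pow UNIV" if "I \<noteq> {}" "\<forall>A\<in>I. \<forall>B\<in>I. A \<union> B \<in> I" "\<forall>A\<in>I. \<forall>B. B \<subseteq> A \<longrightarrow> B \<in> I"
    "Delta_complete I" "Nabla_complete I" for I :: "'a set set"
    using part2[OF assms that] .
  show "\<not> (\<exists>I :: 'a set set. ideal_of I \<and> Delta_complete I \<and> Nabla_complete I)"
  proof
    assume "\<exists>I :: 'a set set. ideal_of I \<and> Delta_complete I \<and> Nabla_complete I"
    then obtain I :: "'a set set" where I: "ideal_of I" "Delta_complete I" "Nabla_complete I" by blast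
    have "I \<noteq> {}" "\<forall>A\<in>I. \<forall>B\<in>I. A \<union> B \<in> I" "\<forall>A\<in>I. \<forall>B. B \<subseteq> A \<longrightarrow> B \<in> I" "UNIV \<notin> I"
      using I(1) unfolding ideal_of_def by blast+
    then have "I = Pow UNIV" using part2[OF assms] I(2,3) by blast
    then show False using \<open>UNIV \<notin> I\<close> by simp
  qed
  show "Delta_complete I" if "group_ideal I" for I :: "'a set set"
    unfolding Delta_complete_def using gi_delta[OF that] by blast
  show "\<forall>A\<in>I. small A" if "group_ideal I" for I :: "'a set set"
    using gi_small[OF that] by blast
qed

end
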